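(* Let $A$ be a self-adjoint operator with form $\mathfrak a$ and let $\alpha,\beta\in\mathbb R$ with $(\alpha,\beta)\subset\rho(A)$. Let $\mathfrak b$ be a non-negative quadratic form with $\mathrm{dom}(\mathfrak b)\supset\mathrm{dom}(\mathfrak a)$ such that $\mathfrak a+\mathfrak b$ with domain $\mathrm{dom}(\mathfrak a)$ is the form (in the sense below) of a self-adjoint operator $C$, and assume there are constants $c,d\ge0$ with $$\mathfrak b[x]\le c\|x\|^2+d\,\mathfrak a[x],\qquad x\in\mathrm{dom}(\mathfrak a).$$ If $\hat\alpha:=\alpha+c+d\alpha<\beta$, then $(\hat\alpha,\beta)\subset\rho(C)$.
   Context: For a self-adjoint operator $A$ with spectral measure $E$, its form is $\mathfrak a[x,y]=\int_{\mathbb R}\mu\,d\langle E(\mu)x,y\rangle$ for $x,y\in\mathrm{dom}(\mathfrak a):=\mathrm{dom}(|A|^{1/2})$, $\mathfrak a[x]:=\mathfrak a[x,x]$; the form of $C$ is defined in the same way from the spectral measure of $C$. *)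

theory Defs
  imports "HOL-Analysis.Analysis"
begin

text \<open>Operators are partial maps on a real Hilbert space: a domain D and a function A,
  only the values on D being relevant.\<close>

definition linear_operator :: "'a::real_inner set \<Rightarrow> ('a \<Rightarrow> 'a) \<Rightarrow> bool" where
  "linear_operator D A \<longleftrightarrow> subspace D \<and>
     (\<forall>x\<in>D. \<forall>y\<in>D. A (x + y) = A x + A y) \<and> (\<forall>x\<in>D. \<forall>r. A (r *\<^sub>R x) = r *\<^sub>R A x)"

definition self_adjoint :: "'a::real_inner set \<Rightarrow> ('a \<Rightarrow> 'a) \<Rightarrow> bool" where
  "self_adjoint D A \<longleftrightarrow> linear_operator D A \<and> closure D = UNIV \<and>
     (\<forall>y z. (\<forall>x\<in>D. inner (A x) y = inner x z) \<longleftrightarrow> (y \<in> D \<and> z = A y))"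

definition real_resolvent_set :: "'a::real_normed_vector set \<Rightarrow> ('a \<Rightarrow> 'a) \<Rightarrow> real set" where
  "real_resolvent_set D A = {l. bij_betw (\<lambda>x. A x - l *\<^sub>R x) D UNIV \<and>
       (\<exists>K. \<forall>x\<in>D. norm x \<le> K * norm (A x - l *\<^sub>R x))}"

definition pvm :: "(real set \<Rightarrow> 'a::real_inner \<Rightarrow> 'a) \<Rightarrow> bool" where
  "pvm E \<longleftrightarrow>
     (\<forall>S\<in>sets (borel :: real measure). bounded_linear (E S) \<and>
        (\<forall>x y. inner (E S x) y = inner x (E S y)) \<and> E S \<circ> E S = E S) \<and>
     E UNIV = id \<and>
     (\<forall>S\<in>sets (borel :: real measure). \<forall>T\<in>sets (borel :: real measure).
        E (S \<inter> T) = E S \<circ> E T) \<and>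
     (\<forall>F. range F \<subseteq> sets (borel :: real measure) \<longrightarrow> disjoint_family F \<longrightarrow>
        (\<forall>x. (\<lambda>n. E (F n) x) sums E (\<Union>n. F n) x))"

definition spec_meas :: "(real set \<Rightarrow> 'a::real_inner \<Rightarrow> 'a) \<Rightarrow> 'a \<Rightarrow> real measure" where
  "spec_meas E x = measure_of UNIV (sets borel) (\<lambda>S. ennreal ((norm (E S x))\<^sup>2))"

text \<open>Domain of the form: dom(|A|^{1/2}) = {x. \<integral> |\<mu>| d<E(\<mu>)x,x> < \<infinity>}.\<close>
definition form_dom :: "(real set \<Rightarrow> 'a::real_inner \<Rightarrow> 'a) \<Rightarrow> 'a set" where
  "form_dom E = {x. integrable (spec_meas E x) (\<lambda>\<mu>. \<bar>\<mu>\<bar>)}"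

text \<open>The form \<integral> \<mu> d<E(\<mu>)x,y>, the signed measure <E(.)x,y> written via polarization.\<close>
definition spec_form :: "(real set \<Rightarrow> 'a::real_inner \<Rightarrow> 'a) \<Rightarrow> 'a \<Rightarrow> 'a \<Rightarrow> real" where
  "spec_form E x y = (integral\<^sup>L (spec_meas E (x + y)) (\<lambda>\<mu>. \<mu>)
                      - integral\<^sup>L (spec_meas E (x - y)) (\<lambda>\<mu>. \<mu>)) / 4"

definition spectral_measure_of ::
    "(real set \<Rightarrow> 'a::real_inner \<Rightarrow> 'a) \<Rightarrow> 'a set \<Rightarrow> ('a \<Rightarrow> 'a) \<Rightarrow> bool" where
  "spectral_measure_of E D A \<longleftrightarrow> pvm E \<and>
     D = {x. integrable (spec_meas E x) (\<lambda>\<mu>. \<mu>\<^sup>2)} \<and>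
     (\<forall>x\<in>D. \<forall>y\<in>form_dom E. inner (A x) y = spec_form E x y)"

definition nonneg_form :: "'a::real_vector set \<Rightarrow> ('a \<Rightarrow> 'a \<Rightarrow> real) \<Rightarrow> bool" where
  "nonneg_form Db b \<longleftrightarrow> subspace Db \<and>
     (\<forall>x\<in>Db. \<forall>y\<in>Db. \<forall>z\<in>Db. b (x + y) z = b x z + b y z) \<and>
     (\<forall>x\<in>Db. \<forall>y\<in>Db. \<forall>r. b (r *\<^sub>R x) y = r * b x y) \<and>
     (\<forall>x\<in>Db. \<forall>y\<in>Db. b x y = b y x) \<and>
     (\<forall>x\<in>Db. b x x \<ge> 0)"

end

theory Submission
  imports Defs
begin

locale pvm_l =
  fixes E :: "real set \<Rightarrow> 'a::real_inner \<Rightarrow> 'a"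
  assumes pvm: "pvm E"
begin

lemma bl: "S \<in> sets borel \<Longrightarrow> bounded_linear (E S)"
  using pvm unfolding pvm_def by blast
lemma sym: "S \<in> sets borel \<Longrightarrow> inner (E S x) y = inner x (E S y)"
  using pvm unfolding pvm_def by blast
lemma univ: "E UNIV x = x"
  using pvm unfolding pvm_def by simp
lemma mult: "S \<in> sets borel \<Longrightarrow> T \<in> sets borel \<Longrightarrow> E (S \<inter> T) x = E S (E T x)"
  using pvm unfolding pvm_def by simp
lemma sums: "range F \<subseteq> sets borel \<Longrightarrow> disjoint_family F \<Longrightarrow> (\<lambda>n. E (F n) x) sums E (\<Union>n. F n) x"
  using pvm unfolding pvm_def by blast
lemma idem: "S \<in> sets borel \<Longrightarrow> E S (E S x) = E S x"
  using mult[of S S x] by simp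

lemma empty: "E {} x = 0"
proof -
  have "(\<lambda>n. E {} x) sums E (\<Union>n. {}) x" using sums[of "\<lambda>n. {}"] by (simp add: disjoint_family_on_def)
  hence "(\<lambda>n. E {} x) \<longlonglongrightarrow> 0" by (metis sums_summable summable_LIMSEQ_zero)
  thus ?thesis by (simp add: LIMSEQ_const_iff)
qed

lemma compl: assumes "S \<in> sets borel" shows "E S x + E (-S) x = x"
proof -
  define F where "F = (\<lambda>n::nat. if n = 0 then S else if n = 1 then -S else {})"
  have r: "range F \<subseteq> sets borel" using assms by (auto simp: F_def)
  have d: "disjoint_family F" by (auto simp: disjoint_family_on_def F_def)
  have U: "(\<Union>n. F n) = UNIV"
  proof -
    { fix m :: real have "m \<in> F 0 \<or> m \<in> F 1" by (auto simp: F_def) }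
    thus ?thesis by blast
  qed
  have "(\<lambda>n. E (F n) x) sums (\<Sum>n\<in>{0,1}. E (F n) x)" by (rule sums_finite) (auto simp: F_def empty)
  moreover have "(\<lambda>n. E (F n) x) sums x" using sums[OF r d, of x] U univ by simp
  ultimately show ?thesis by (simp add: F_def sums_unique2)
qed

lemma inner_EE: "S \<in> sets borel \<Longrightarrow> T \<in> sets borel \<Longrightarrow> inner (E S x) (E T y) = inner (E (S \<inter> T) x) y"
proof -
  assume a: "S \<in> sets borel" "T \<in> sets borel"
  have "inner (E S x) (E T y) = inner x (E S (E T y))" using a sym by blast
  also have "\<dots> = inner x (E (S \<inter> T) y)" using a mult by simp
  also have "\<dots> = inner (E (S \<inter> T) x) y" using a sym[of "S \<inter> T"] by simp
  finally show ?thesis .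
qed

lemma disj: "S \<in> sets borel \<Longrightarrow> inner (E S x) (E (-S) y) = 0"
  using inner_EE[of S "-S" x y] by (simp add: empty)

lemma norm_sq: "S \<in> sets borel \<Longrightarrow> (norm (E S x))\<^sup>2 = inner (E S x) x"
  by (simp add: power2_norm_eq_inner inner_EE)

lemma E_scale: "S \<in> sets borel \<Longrightarrow> E S (r *\<^sub>R x) = r *\<^sub>R E S x"
  using linear_scale[OF bounded_linear.linear[OF bl[of S]]] by blast
lemma E_add: "S \<in> sets borel \<Longrightarrow> E S (x + y) = E S x + E S y"
  using linear_add[OF bounded_linear.linear[OF bl[of S]]] by blast
lemma E_diff: "S \<in> sets borel \<Longrightarrow> E S (x - y) = E S x - E S y"
  using linear_diff[OF bounded_linear.linear[OF bl[of S]]] by blast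

lemma ca: "countably_additive (sets borel) (\<lambda>S. ennreal ((norm (E S x))\<^sup>2))"
proof (rule countably_additiveI)
  fix F :: "nat \<Rightarrow> real set" assume r: "range F \<subseteq> sets borel" and d: "disjoint_family F"
    and "\<Union> (range F) \<in> sets borel"
  have "(\<lambda>n. inner (\<Sum>i<n. E (F i) x) x) \<longlonglongrightarrow> inner (E (\<Union>n. F n) x) x"
    using sums[OF r d, of x] unfolding sums_def by (intro tendsto_intros)
  hence "(\<lambda>n. (norm (E (F n) x))\<^sup>2) sums (norm (E (\<Union>n. F n) x))\<^sup>2"
    unfolding sums_def using r
    by (subst norm_sq, force, subst norm_sq, force)+ (simp add: inner_sum_left)
  hence "(\<Sum>i. ennreal ((norm (E (F i) x))\<^sup>2)) = ennreal ((norm (E (\<Union>n. F n) x))\<^sup>2)"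
    by (simp add: suminf_ennreal2 sums_summable sums_unique[symmetric])
  thus "(\<Sum>i. ennreal ((norm (E (F i) x))\<^sup>2)) = ennreal ((norm (E (\<Union>i. F i) x))\<^sup>2)" by simp
qed

lemma sets_M[measurable_cong]: "sets (spec_meas E x) = sets borel"
  unfolding spec_meas_def using sets.sigma_sets_eq[of borel] by (simp add: sets_measure_of_conv)

lemma space_M[simp]: "space (spec_meas E x) = UNIV"
  using sets_eq_imp_space_eq[OF sets_M] by simp

lemma emeasure_M: "S \<in> sets borel \<Longrightarrow> emeasure (spec_meas E x) S = ennreal ((norm (E S x))\<^sup>2)"
  unfolding spec_meas_def
  apply (rule emeasure_measure_of_sigma)
  using sets.sigma_algebra_axioms[of borel] apply simp
  apply (simp add: positive_def empty)
  apply (rule ca)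
  by simp

lemma measure_M: "S \<in> sets borel \<Longrightarrow> measure (spec_meas E x) S = (norm (E S x))\<^sup>2"
  by (simp add: measure_def emeasure_M)

lemma finite_M: "finite_measure (spec_meas E x)"
  by (rule finite_measureI) (simp add: emeasure_M)

lemma measure_M_UNIV: "measure (spec_meas E x) UNIV = (norm x)\<^sup>2"
  by (simp add: measure_M univ)


lemma AE_support: assumes "S \<in> sets borel" shows "AE \<mu> in spec_meas E (E S x). \<mu> \<in> S"
proof -
  have "emeasure (spec_meas E (E S x)) (-S) = 0"
    using assms by (simp add: emeasure_M mult[symmetric] empty Int_commute)
  hence "-S \<in> null_sets (spec_meas E (E S x))" using assms by (simp add: null_sets_def sets_M)
  thus ?thesis by (rule AE_I') auto
qed

lemma M_restrict: assumes "S \<in> sets borel"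
  shows "spec_meas E (E S x) = density (spec_meas E x) (\<lambda>\<mu>. ennreal (indicator S \<mu>))"
proof (rule measure_eqI)
  show "sets (spec_meas E (E S x)) = sets (density (spec_meas E x) (\<lambda>\<mu>. ennreal (indicator S \<mu>)))"
    by (simp add: sets_M)
  fix A assume A: "A \<in> sets (spec_meas E (E S x))"
  hence A': "A \<in> sets borel" by (simp add: sets_M)
  have "emeasure (density (spec_meas E x) (\<lambda>\<mu>. ennreal (indicator S \<mu>))) A
      = (\<integral>\<^sup>+\<mu>. ennreal (indicator S \<mu>) * indicator A \<mu> \<partial>spec_meas E x)"
    using A' assms by (subst emeasure_density) (auto simp: sets_M)
  also have "\<dots> = (\<integral>\<^sup>+\<mu>. indicator (A \<inter> S) \<mu> \<partial>spec_meas E x)"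
    by (rule nn_integral_cong) (auto simp: indicator_def)
  also have "\<dots> = emeasure (spec_meas E x) (A \<inter> S)"
    using A' assms by (subst nn_integral_indicator) (auto simp: sets_M)
  also have "\<dots> = emeasure (spec_meas E (E S x)) A"
    using A' assms by (simp add: emeasure_M mult)
  finally show "emeasure (spec_meas E (E S x)) A = emeasure (density (spec_meas E x) (\<lambda>\<mu>. ennreal (indicator S \<mu>))) A"
    by simp
qed

lemma M_scale: "spec_meas E (r *\<^sub>R x) = density (spec_meas E x) (\<lambda>_. ennreal (r\<^sup>2))"
proof (rule measure_eqI)
  show "sets (spec_meas E (r *\<^sub>R x)) = sets (density (spec_meas E x) (\<lambda>_. ennreal (r\<^sup>2)))"
    by (simp add: sets_M)
  fix A assume A: "A \<in> sets (spec_meas E (r *\<^sub>R x))"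
  hence A': "A \<in> sets borel" by (simp add: sets_M)
  show "emeasure (spec_meas E (r *\<^sub>R x)) A = emeasure (density (spec_meas E x) (\<lambda>_. ennreal (r\<^sup>2))) A"
    using A' by (simp add: emeasure_density_const sets_M emeasure_M E_scale ennreal_mult[symmetric] power_mult_distrib)
qed

lemma integral_M_scale:
  "integral\<^sup>L (spec_meas E (r *\<^sub>R x)) (\<lambda>\<mu>. \<mu>) = r\<^sup>2 * integral\<^sup>L (spec_meas E x) (\<lambda>\<mu>. \<mu>)"
  unfolding M_scale by (subst integral_density) auto

lemma form_self: "spec_form E v v = integral\<^sup>L (spec_meas E v) (\<lambda>\<mu>. \<mu>)"
proof -
  have "spec_form E v v = (integral\<^sup>L (spec_meas E (2 *\<^sub>R v)) (\<lambda>\<mu>. \<mu>)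
      - integral\<^sup>L (spec_meas E (0 *\<^sub>R v)) (\<lambda>\<mu>. \<mu>)) / 4"
    unfolding spec_form_def by (simp add: scaleR_2)
  thus ?thesis by (simp only: integral_M_scale) simp
qed

lemma form_split: assumes "S \<in> sets borel"
  shows "spec_form E x (E (-S) x - E S x) = spec_form E (E (-S) x) (E (-S) x) - spec_form E (E S x) (E S x)"
proof -
  have x: "x = E S x + E (-S) x" using compl[OF assms] by simp
  have "x + (E (-S) x - E S x) = 2 *\<^sub>R E (-S) x" by (subst (1) x) (simp add: scaleR_2)
  moreover have "x - (E (-S) x - E S x) = 2 *\<^sub>R E S x" by (subst (1) x) (simp add: scaleR_2)
  ultimately have "spec_form E x (E (-S) x - E S x) = (integral\<^sup>L (spec_meas E (2 *\<^sub>R E (-S) x)) (\<lambda>\<mu>. \<mu>)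
      - integral\<^sup>L (spec_meas E (2 *\<^sub>R E S x)) (\<lambda>\<mu>. \<mu>)) / 4"
    unfolding spec_form_def by simp
  also have "\<dots> = integral\<^sup>L (spec_meas E (E (-S) x)) (\<lambda>\<mu>. \<mu>) - integral\<^sup>L (spec_meas E (E S x)) (\<lambda>\<mu>. \<mu>)"
    by (simp only: integral_M_scale) simp
  finally show ?thesis by (simp add: form_self)
qed

lemma norm_add_sq: "(norm (a + b))\<^sup>2 = (norm a)\<^sup>2 + 2 * inner a b + (norm b)\<^sup>2"
  for a b :: 'a
  by (simp add: power2_norm_eq_inner inner_add_left inner_add_right inner_commute)
lemma norm_diff_sq: "(norm (a - b))\<^sup>2 = (norm a)\<^sup>2 - 2 * inner a b + (norm b)\<^sup>2"
  for a b :: 'a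
  by (simp add: power2_norm_eq_inner inner_diff_left inner_diff_right inner_commute)

lemma orth_T: assumes "S \<in> sets borel" "T \<in> sets borel"
  shows "inner (E T (E S x)) (E T (E (-S) y)) = 0"
proof -
  have "E T (E S x) = E S (E T x)" using assms by (metis mult Int_commute)
  moreover have "E T (E (-S) y) = E (-S) (E T y)" using assms by (metis mult Int_commute borel_comp)
  ultimately show ?thesis using disj[OF assms(1)] by simp
qed

lemma M_orth: assumes "S \<in> sets borel"
  shows "spec_meas E (E S x + E (-S) y) = spec_meas E (E S x - E (-S) y)"
proof (rule measure_eqI)
  show "sets (spec_meas E (E S x + E (-S) y)) = sets (spec_meas E (E S x - E (-S) y))"
    by (simp add: sets_M)
  fix A assume A: "A \<in> sets (spec_meas E (E S x + E (-S) y))"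
  hence A': "A \<in> sets borel" by (simp add: sets_M)
  show "emeasure (spec_meas E (E S x + E (-S) y)) A = emeasure (spec_meas E (E S x - E (-S) y)) A"
    using A' orth_T[OF assms A', of x y]
    by (simp add: emeasure_M E_add E_diff norm_add_sq norm_diff_sq)
qed

lemma M_orth_sum: assumes "S \<in> sets borel"
  shows "spec_meas E (E (-S) x - E S x) = spec_meas E x"
proof -
  have "spec_meas E (E (-S) x - E S x) = spec_meas E (E S x - E (-S) x)"
  proof (rule measure_eqI)
    fix A assume "A \<in> sets (spec_meas E (E (- S) x - E S x))"
    hence A': "A \<in> sets borel" by (simp add: sets_M)
    thus "emeasure (spec_meas E (E (- S) x - E S x)) A = emeasure (spec_meas E (E S x - E (- S) x)) A"
      by (simp add: emeasure_M E_diff norm_minus_commute)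
  qed (simp add: sets_M)
  also have "\<dots> = spec_meas E (E S x + E (-S) x)" using M_orth[OF assms] by simp
  finally show ?thesis using compl[OF assms] by simp
qed


lemma fd_restrict: assumes "x \<in> form_dom E" "S \<in> sets borel" shows "E S x \<in> form_dom E"
proof -
  have "integrable (spec_meas E x) (\<lambda>\<mu>. indicator S \<mu> *\<^sub>R \<bar>\<mu>\<bar>)"
    using assms by (intro integrable_mult_indicator) (auto simp: form_dom_def sets_M)
  thus ?thesis unfolding form_dom_def mem_Collect_eq M_restrict[OF assms(2)]
    using assms(2) by (subst integrable_density) (auto simp: sets_M)
qed

lemma fd_scale: assumes "x \<in> form_dom E" shows "r *\<^sub>R x \<in> form_dom E"
proof -
  have "integrable (spec_meas E x) (\<lambda>\<mu>. r\<^sup>2 *\<^sub>R \<bar>\<mu>\<bar>)"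
    using assms by (intro integrable_scaleR_right) (auto simp: form_dom_def)
  thus ?thesis unfolding form_dom_def mem_Collect_eq M_scale
    by (subst integrable_density) auto
qed

lemma int_bounded: fixes f :: "real \<Rightarrow> real" assumes "S \<in> sets borel" "\<And>\<mu>. \<mu> \<in> S \<Longrightarrow> \<bar>f \<mu>\<bar> \<le> B" "f \<in> borel_measurable borel"
  shows "integrable (spec_meas E (E S x)) f"
proof (rule finite_measure.integrable_const_bound[OF finite_M, where B=B])
  show "AE \<mu> in spec_meas E (E S x). norm (f \<mu>) \<le> B"
    by (rule eventually_mono[OF AE_support[OF assms(1), of x]]) (use assms(2) in auto)
qed (use assms in simp)

lemma fd_sq: assumes "integrable (spec_meas E x) (\<lambda>\<mu>. \<mu>\<^sup>2)" shows "x \<in> form_dom E"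
proof -
  have i: "integrable (spec_meas E x) (\<lambda>\<mu>. 1 + \<mu>\<^sup>2)"
    by (rule Bochner_Integration.integrable_add[OF finite_measure.integrable_const[OF finite_M] assms])
  have b: "\<bar>\<mu>\<bar> \<le> 1 + \<mu>\<^sup>2" for \<mu> :: real
  proof (cases "\<bar>\<mu>\<bar> \<le> 1")
    case True moreover have "0 \<le> \<mu>\<^sup>2" by simp
    ultimately show ?thesis by linarith
  next
    case False hence "\<bar>\<mu>\<bar> * 1 \<le> \<bar>\<mu>\<bar> * \<bar>\<mu>\<bar>" by (intro mult_left_mono) auto
    thus ?thesis by (simp add: power2_eq_square abs_mult[symmetric])
  qed
  show ?thesis unfolding form_dom_def mem_Collect_eq
  proof (rule Bochner_Integration.integrable_bound[OF i])
    show "AE \<mu> in spec_meas E x. norm \<bar>\<mu>\<bar> \<le> norm (1 + \<mu>\<^sup>2)"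
      using b by (intro AE_I2) (simp add: add_nonneg_nonneg)
  qed simp
qed

lemma int_le: assumes "integrable (spec_meas E v) (\<lambda>\<mu>. \<mu>)" "AE \<mu> in spec_meas E v. \<mu> \<le> a"
  shows "integral\<^sup>L (spec_meas E v) (\<lambda>\<mu>. \<mu>) \<le> a * (norm v)\<^sup>2"
proof -
  have "integral\<^sup>L (spec_meas E v) (\<lambda>\<mu>. \<mu>) \<le> integral\<^sup>L (spec_meas E v) (\<lambda>\<mu>. a)"
    using assms finite_measure.integrable_const[OF finite_M] by (intro integral_mono_AE) auto
  thus ?thesis by (simp add: measure_M_UNIV mult.commute)
qed

lemma int_ge: assumes "integrable (spec_meas E v) (\<lambda>\<mu>. \<mu>)" "AE \<mu> in spec_meas E v. a \<le> \<mu>"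
  shows "a * (norm v)\<^sup>2 \<le> integral\<^sup>L (spec_meas E v) (\<lambda>\<mu>. \<mu>)"
proof -
  have "integral\<^sup>L (spec_meas E v) (\<lambda>\<mu>. a) \<le> integral\<^sup>L (spec_meas E v) (\<lambda>\<mu>. \<mu>)"
    using assms finite_measure.integrable_const[OF finite_M] by (intro integral_mono_AE) auto
  thus ?thesis by (simp add: measure_M_UNIV mult.commute)
qed


lemma dense_zero: assumes "closure D = UNIV" "\<And>w. w \<in> D \<Longrightarrow> inner a w = 0" shows "a = 0"
proof -
  have "D \<subseteq> {w. inner a w = 0}" using assms(2) by auto
  hence "closure D \<subseteq> {w. inner a w = 0}" using closed_hyperplane[of a 0] by (rule closure_minimal)
  hence "a \<in> {w. inner a w = 0}" using assms(1) by blast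
  thus ?thesis by simp
qed

lemma near_bound: assumes J: "J = {l-\<epsilon><..<l+\<epsilon>}"
  shows "\<bar>integral\<^sup>L (spec_meas E (E J y)) (\<lambda>\<mu>. \<mu>) - l * (norm (E J y))\<^sup>2\<bar> \<le> \<epsilon> * (norm (E J y))\<^sup>2"
proof -
  have Jb: "J \<in> sets borel" using J by simp
  have i: "integrable (spec_meas E (E J y)) (\<lambda>\<mu>. \<mu>)"
    by (rule int_bounded[OF Jb, where B="\<bar>l\<bar> + \<bar>\<epsilon>\<bar>"]) (auto simp: J)
  have ae: "AE \<mu> in spec_meas E (E J y). \<mu> \<in> J" by (rule AE_support[OF Jb])
  have "integral\<^sup>L (spec_meas E (E J y)) (\<lambda>\<mu>. \<mu>) \<le> (l + \<epsilon>) * (norm (E J y))\<^sup>2"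
    by (rule int_le[OF i]) (rule eventually_mono[OF ae], auto simp: J)
  moreover have "(l - \<epsilon>) * (norm (E J y))\<^sup>2 \<le> integral\<^sup>L (spec_meas E (E J y)) (\<lambda>\<mu>. \<mu>)"
    by (rule int_ge[OF i]) (rule eventually_mono[OF ae], auto simp: J)
  ultimately show ?thesis by (simp add: algebra_simps abs_le_iff)
qed

lemma aux4: "\<bar>a\<bar> \<le> p \<Longrightarrow> \<bar>b\<bar> \<le> (q::real) \<Longrightarrow> a/4 - b/4 \<le> p/4 + q/4"
  by (simp add: abs_le_iff)

lemma parallel_eps: "e * (norm (a+b))\<^sup>2 / 4 + e * (norm (a-b))\<^sup>2 / 4 = e * ((norm a)\<^sup>2 + (norm b)\<^sup>2) / 2"
  for a b :: 'a
proof -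
  have p: "(norm (a+b))\<^sup>2 + (norm (a-b))\<^sup>2 = 2*(norm a)\<^sup>2 + 2*(norm b)\<^sup>2"
    unfolding norm_add_sq norm_diff_sq by simp
  have "e * (norm (a+b))\<^sup>2 / 4 + e * (norm (a-b))\<^sup>2 / 4 = e * ((norm (a+b))\<^sup>2 + (norm (a-b))\<^sup>2) / 4"
    by (simp add: distrib_left add_divide_distrib)
  also have "\<dots> = e * ((norm a)\<^sup>2 + (norm b)\<^sup>2) / 2" unfolding p by simp
  finally show ?thesis .
qed

lemma aux5: "q1 - q2 = 4 * t \<Longrightarrow> (I - J) / 4 - t = (I - q1) / 4 - (J - q2) / (4::real)"
  by (simp add: diff_divide_distrib)

lemma local_zero:
  assumes sm: "spectral_measure_of E D A" and dense: "closure D = UNIV"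
    and K: "\<forall>x\<in>D. norm x \<le> K * norm (A x - l *\<^sub>R x)"
    and e: "0 < \<epsilon>" "\<epsilon> \<le> 1" "K\<^sup>2 * \<epsilon> < 1"
  shows "E {l-\<epsilon><..<l+\<epsilon>} x = 0"
proof -
  define J where "J = {l-\<epsilon><..<l+\<epsilon>}"
  have Jb: "J \<in> sets borel" "-J \<in> sets borel" by (auto simp: J_def)
  define z where "z = E J x"
  have D: "D = {x. integrable (spec_meas E x) (\<lambda>\<mu>. \<mu>\<^sup>2)}"
    and Af: "\<forall>x\<in>D. \<forall>y\<in>form_dom E. inner (A x) y = spec_form E x y"
    using sm by (auto simp: spectral_measure_of_def)
  have bnd: "\<mu> \<in> J \<Longrightarrow> \<bar>\<mu>\<bar> \<le> \<bar>l\<bar> + 1" for \<mu> using e by (auto simp: J_def)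
  have zD: "z \<in> D" unfolding D z_def mem_Collect_eq
  proof (rule int_bounded[OF Jb(1), where B="(\<bar>l\<bar> + 1)\<^sup>2"])
    fix \<mu> assume "\<mu> \<in> J"
    hence "\<bar>\<mu>\<bar> \<le> \<bar>l\<bar> + 1" by (rule bnd)
    hence "\<bar>\<mu>\<bar>\<^sup>2 \<le> (\<bar>l\<bar> + 1)\<^sup>2" by (rule power_mono) simp
    thus "\<bar>\<mu>\<^sup>2\<bar> \<le> (\<bar>l\<bar> + 1)\<^sup>2" by simp
  qed simp
  have fdJ: "E J v \<in> form_dom E" for v unfolding form_dom_def mem_Collect_eq
    by (rule int_bounded[OF Jb(1), where B="\<bar>l\<bar> + 1"]) (auto dest: bnd)
  define u where "u = A z - l *\<^sub>R z"
  have "E (-J) u = 0"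
  proof (rule dense_zero[OF dense])
    fix w assume w: "w \<in> D"
    hence wf: "w \<in> form_dom E" using D fd_sq by blast
    have vf: "E (-J) w \<in> form_dom E" by (rule fd_restrict[OF wf Jb(2)])
    have "inner (A z) (E (-J) w) = spec_form E z (E (-J) w)" using Af zD vf by blast
    also have "\<dots> = 0" unfolding spec_form_def z_def using M_orth[OF Jb(1), of x w] by simp
    finally have 1: "inner (A z) (E (-J) w) = 0" .
    have 2: "inner z (E (-J) w) = 0" unfolding z_def by (rule disj[OF Jb(1)])
    have "inner u (E (-J) w) = 0" unfolding u_def using 1 2 by (simp add: inner_diff_left)
    thus "inner (E (-J) u) w = 0" using sym[OF Jb(2)] by simp
  qed
  hence uJ: "u = E J u" using compl[OF Jb(1), of u] by simp
  have uf: "u \<in> form_dom E" using fdJ uJ by metis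
  have a: "E J (x + u) = z + u" using Jb by (simp add: E_add z_def uJ[symmetric])
  have b: "E J (x - u) = z - u" using Jb by (simp add: E_diff z_def uJ[symmetric])
  have "(norm u)\<^sup>2 = inner (A z) u - l * inner z u"
    unfolding u_def by (simp add: power2_norm_eq_inner inner_diff_left)
  also have "\<dots> = spec_form E z u - l * inner z u" using Af zD uf by simp
  also have "\<dots> = (integral\<^sup>L (spec_meas E (E J (x + u))) (\<lambda>\<mu>. \<mu>) - l * (norm (E J (x + u)))\<^sup>2) / 4
      - (integral\<^sup>L (spec_meas E (E J (x - u))) (\<lambda>\<mu>. \<mu>) - l * (norm (E J (x - u)))\<^sup>2) / 4"
  proof -
    have q: "l * (norm (z+u))\<^sup>2 - l * (norm (z-u))\<^sup>2 = 4 * (l * inner z u)"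
      unfolding norm_add_sq norm_diff_sq by (simp add: algebra_simps)
    show ?thesis unfolding a b spec_form_def by (rule aux5[OF q])
  qed
  also have "\<dots> \<le> \<epsilon> * (norm (E J (x + u)))\<^sup>2 / 4 + \<epsilon> * (norm (E J (x - u)))\<^sup>2 / 4"
    by (rule aux4[OF near_bound[OF J_def, of "x + u"] near_bound[OF J_def, of "x - u"]])
  also have "\<dots> = \<epsilon> * ((norm z)\<^sup>2 + (norm u)\<^sup>2) / 2"
    unfolding a b by (rule parallel_eps)
  finally have 1: "(norm u)\<^sup>2 \<le> \<epsilon> * ((norm z)\<^sup>2 + (norm u)\<^sup>2) / 2" .
  have 2: "(norm u)\<^sup>2 \<le> \<epsilon> * (norm z)\<^sup>2"
  proof -
    have "(norm u)\<^sup>2 * (2 - \<epsilon>) \<le> \<epsilon> * (norm z)\<^sup>2" using 1 by (simp add: algebra_simps)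
    moreover have "(norm u)\<^sup>2 \<le> (norm u)\<^sup>2 * (2 - \<epsilon>)" using e by (simp add: mult_le_cancel_left1)
    ultimately show ?thesis by linarith
  qed
  have "norm z \<le> K * norm u" using K zD u_def by blast
  hence "(norm z)\<^sup>2 \<le> (K * norm u)\<^sup>2" by (rule power_mono) simp
  also have "\<dots> = K\<^sup>2 * (norm u)\<^sup>2" by (simp add: power_mult_distrib)
  also have "\<dots> \<le> K\<^sup>2 * (\<epsilon> * (norm z)\<^sup>2)" using 2 by (intro mult_left_mono) auto
  finally have "(norm z)\<^sup>2 * 1 \<le> (norm z)\<^sup>2 * (K\<^sup>2 * \<epsilon>)" by (simp add: algebra_simps)
  hence "(norm z)\<^sup>2 = 0"
  proof (rule contrapos_pp)
    assume "(norm z)\<^sup>2 \<noteq> 0"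
    hence "0 < (norm z)\<^sup>2" by simp
    thus "\<not> (norm z)\<^sup>2 * 1 \<le> (norm z)\<^sup>2 * (K\<^sup>2 * \<epsilon>)" using e(3) by (simp add: mult_le_cancel_left_pos)
  qed
  thus ?thesis by (simp add: z_def J_def)
qed


lemma gap_zero:
  assumes sm: "spectral_measure_of E D A" and dense: "closure D = UNIV"
    and gap: "{\<alpha><..<\<beta>} \<subseteq> real_resolvent_set D A"
  shows "E {\<alpha><..<\<beta>} x = 0"
proof -
  define F where "F = {I. open I \<and> I \<subseteq> {\<alpha><..<\<beta>} \<and> (\<forall>x. E I x = 0)}"
  have cover: "\<exists>I\<in>F. l \<in> I" if l: "l \<in> {\<alpha><..<\<beta>}" for l
  proof -
    obtain K where K: "\<forall>x\<in>D. norm x \<le> K * norm (A x - l *\<^sub>R x)"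
      using gap l unfolding real_resolvent_set_def by blast
    define \<epsilon> where "\<epsilon> = min (min (l - \<alpha>) (\<beta> - l)) (min 1 (1 / (2 * (K\<^sup>2 + 1))))"
    have K0: "0 \<le> K\<^sup>2" by simp
    have pos: "0 < 2 * (K\<^sup>2 + 1)" by (metis add_pos_nonneg zero_le_power2 zero_less_one mult_pos_pos zero_less_numeral add.commute)
    have e0: "0 < \<epsilon>" using l pos by (simp add: \<epsilon>_def)
    have e1: "\<epsilon> \<le> 1" by (simp add: \<epsilon>_def)
    have "K\<^sup>2 * \<epsilon> \<le> K\<^sup>2 * (1 / (2 * (K\<^sup>2 + 1)))" by (intro mult_left_mono) (auto simp: \<epsilon>_def)
    also have "\<dots> = K\<^sup>2 / (2 * (K\<^sup>2 + 1))" by simp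
    also have "\<dots> < 1" using pos K0 by (subst divide_less_eq_1_pos) (assumption, unfold distrib_left, linarith)
    finally have e2: "K\<^sup>2 * \<epsilon> < 1" .
    have "\<forall>x. E {l-\<epsilon><..<l+\<epsilon>} x = 0" using local_zero[OF sm dense K e0 e1 e2] by blast
    moreover have "\<epsilon> \<le> l - \<alpha>" "\<epsilon> \<le> \<beta> - l" unfolding \<epsilon>_def by linarith+
    hence "{l-\<epsilon><..<l+\<epsilon>} \<subseteq> {\<alpha><..<\<beta>}" by auto
    ultimately have "{l-\<epsilon><..<l+\<epsilon>} \<in> F" unfolding F_def by (intro CollectI conjI open_greaterThanLessThan)
    moreover have "l \<in> {l-\<epsilon><..<l+\<epsilon>}" using e0 by simp
    ultimately show ?thesis by blast
  qed
  have UF: "\<Union>F = {\<alpha><..<\<beta>}"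
  proof
    show "\<Union>F \<subseteq> {\<alpha><..<\<beta>}" unfolding F_def by blast
    show "{\<alpha><..<\<beta>} \<subseteq> \<Union>F"
    proof
      fix l assume "l \<in> {\<alpha><..<\<beta>}"
      from cover[OF this] show "l \<in> \<Union>F" by blast
    qed
  qed
  obtain F' where F': "F' \<subseteq> F" "countable F'" "\<Union>F' = \<Union>F"
    using Lindelof[of F] unfolding F_def by blast
  have "(\<Union>I\<in>F'. I) \<in> null_sets (spec_meas E x)"
  proof (rule null_sets_UN'[OF F'(2)])
    fix I assume "I \<in> F'"
    hence I: "open I" "\<forall>x. E I x = 0" using F'(1) by (auto simp: F_def)
    thus "I \<in> null_sets (spec_meas E x)" by (simp add: null_sets_def sets_M emeasure_M)
  qed
  hence "{\<alpha><..<\<beta>} \<in> null_sets (spec_meas E x)" using F'(3) UF by simp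
  hence "emeasure (spec_meas E x) {\<alpha><..<\<beta>} = 0" by blast
  thus ?thesis by (simp add: emeasure_M)
qed

end

lemma par_law: "(norm (a - b))\<^sup>2 + (norm (a + b))\<^sup>2 = 2 * (norm a)\<^sup>2 + 2 * (norm b)\<^sup>2"
  for a b :: "'a::real_inner"
  by (simp add: power2_norm_eq_inner inner_add_left inner_add_right inner_diff_left inner_diff_right inner_commute)

lemma nds: "(norm (a - b))\<^sup>2 = (norm a)\<^sup>2 - 2 * inner a b + (norm b)\<^sup>2"
  for a b :: "'a::real_inner"
  by (simp add: power2_norm_eq_inner inner_diff_left inner_diff_right inner_commute)

lemma nds_scale: "(norm (g - t *\<^sub>R y))\<^sup>2 = (norm g)\<^sup>2 - 2 * t * inner g y + t\<^sup>2 * (norm (y::'a::real_inner))\<^sup>2"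
  unfolding nds by (simp add: power_mult_distrib)

lemma proj_exists:
  fixes R :: "'a::{real_inner,complete_space} set"
  assumes cl: "closed R" and sub: "subspace R"
  shows "\<exists>r\<in>R. \<forall>y\<in>R. inner (f - r) y = 0"
proof -
  define V where "V = (\<lambda>r. (norm (f - r))\<^sup>2) ` R"
  define d where "d = Inf V"
  have R0: "0 \<in> R" using sub by (rule subspace_0)
  have Vne: "V \<noteq> {}" using R0 by (auto simp: V_def)
  have Vb: "bdd_below V" unfolding V_def by (rule bdd_belowI[where m=0]) auto
  have dle: "d \<le> (norm (f - r))\<^sup>2" if "r \<in> R" for r
    unfolding d_def using Vb that by (intro cInf_lower) (auto simp: V_def)
  have "\<forall>n::nat. \<exists>r\<in>R. (norm (f - r))\<^sup>2 < d + 1 / (real n + 1)"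
  proof
    fix n :: nat
    have "Inf V < d + 1 / (real n + 1)" by (simp add: d_def)
    from cInf_lessD[OF Vne this] show "\<exists>r\<in>R. (norm (f - r))\<^sup>2 < d + 1 / (real n + 1)"
      by (auto simp: V_def)
  qed
  then obtain r where rR: "\<And>n. r n \<in> R" and rd: "\<And>n. (norm (f - r n))\<^sup>2 < d + 1 / (real n + 1)"
    by metis
  have cb: "(norm (r n - r m))\<^sup>2 \<le> 2 / (real n + 1) + 2 / (real m + 1)" for n m
  proof -
    define a where "a = f - r m" define b where "b = f - r n"
    have "(1/2) *\<^sub>R (r n + r m) \<in> R" using rR sub by (intro subspace_scale subspace_add) auto
    hence "d \<le> (norm (f - (1/2) *\<^sub>R (r n + r m)))\<^sup>2" by (rule dle)
    moreover have "a + b = 2 *\<^sub>R (f - (1/2) *\<^sub>R (r n + r m))"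
      by (simp add: a_def b_def algebra_simps scaleR_2)
    hence "(norm (a + b))\<^sup>2 = 4 * (norm (f - (1/2) *\<^sub>R (r n + r m)))\<^sup>2"
      by (simp add: power_mult_distrib)
    moreover have "a - b = r n - r m" by (simp add: a_def b_def)
    moreover note par_law[of a b] rd[of n] rd[of m]
    ultimately show ?thesis by (simp add: a_def b_def)
  qed
  have "Cauchy r"
  proof (rule metric_CauchyI)
    fix e :: real assume e: "0 < e"
    obtain M :: nat where M: "4 / (e\<^sup>2) < real M" using reals_Archimedean2 by blast
    have e2: "0 < e\<^sup>2" using e by simp
    show "\<exists>M. \<forall>m\<ge>M. \<forall>n\<ge>M. dist (r m) (r n) < e"
    proof (intro exI allI impI)
      fix m n assume mn: "M \<le> m" "M \<le> n"
      have h: "2 / (real k + 1) \<le> 2 / (real M + 1)" if "M \<le> k" for k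
        using that by (intro divide_left_mono) auto
      have "(norm (r m - r n))\<^sup>2 \<le> 4 / (real M + 1)"
        using cb[of m n] h[OF mn(1)] h[OF mn(2)] by simp
      also have "\<dots> < e\<^sup>2"
      proof -
        have "4 < e\<^sup>2 * real M" using M e2 by (simp add: divide_less_eq mult.commute)
        also have "\<dots> < e\<^sup>2 * (real M + 1)" using e2 by simp
        finally show ?thesis by (simp add: divide_less_eq)
      qed
      finally have "(norm (r m - r n))\<^sup>2 < e\<^sup>2" .
      hence "norm (r m - r n) < e" using e by (simp add: power_less_imp_less_base)
      thus "dist (r m) (r n) < e" by (simp add: dist_norm)
    qed
  qed
  then obtain r0 where lim: "r \<longlonglongrightarrow> r0" using Cauchy_convergent_iff convergent_def by blast
  have r0R: "r0 \<in> R" using closed_sequentially[OF cl] rR lim by blast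
  have "(\<lambda>n. (norm (f - r n))\<^sup>2) \<longlonglongrightarrow> (norm (f - r0))\<^sup>2" using lim by (intro tendsto_intros)
  moreover have "(\<lambda>n. d + 1 / (real n + 1)) \<longlonglongrightarrow> d + 0"
  proof (intro tendsto_intros)
    have "(\<lambda>n. inverse (real (Suc n))) \<longlonglongrightarrow> 0" by (rule LIMSEQ_inverse_real_of_nat)
    thus "(\<lambda>n. 1 / (real n + 1)) \<longlonglongrightarrow> 0" by (simp add: inverse_eq_divide add.commute)
  qed
  ultimately have fr: "(norm (f - r0))\<^sup>2 \<le> d"
    using rd by (intro LIMSEQ_le[where X="\<lambda>n. (norm (f - r n))\<^sup>2"]) (auto intro: less_imp_le)
  show ?thesis
  proof (intro bexI[OF _ r0R] ballI)
    fix y assume y: "y \<in> R"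
    define g where "g = f - r0"
    define p where "p = inner g y"
    have key: "2 * t * p \<le> t\<^sup>2 * (norm y)\<^sup>2" for t
    proof -
      have "r0 + t *\<^sub>R y \<in> R" using sub r0R y by (intro subspace_add subspace_scale) auto
      hence "d \<le> (norm (f - (r0 + t *\<^sub>R y)))\<^sup>2" by (rule dle)
      also have "f - (r0 + t *\<^sub>R y) = g - t *\<^sub>R y" by (simp add: g_def)
      also have "(norm (g - t *\<^sub>R y))\<^sup>2 = (norm g)\<^sup>2 - 2 * t * p + t\<^sup>2 * (norm y)\<^sup>2"
        unfolding p_def by (rule nds_scale)
      finally show ?thesis using fr by (simp add: g_def)
    qed
    show "inner (f - r0) y = 0"
    proof (cases "y = 0")
      case True thus ?thesis by simp
    next
      case False
      hence N: "0 < (norm y)\<^sup>2" by simp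
      have "2 * (p / (norm y)\<^sup>2) * p \<le> (p / (norm y)\<^sup>2)\<^sup>2 * (norm y)\<^sup>2" by (rule key)
      also have "\<dots> = p * p / (norm y)\<^sup>2" using N by (simp add: power2_eq_square)
      finally have "2 * (p * p / (norm y)\<^sup>2) \<le> p * p / (norm y)\<^sup>2" by simp
      hence "p * p / (norm y)\<^sup>2 \<le> 0" by linarith
      hence "p * p \<le> 0" using N by (simp add: divide_le_0_iff)
      moreover have "0 \<le> p * p" by simp
      ultimately have "p * p = 0" by linarith
      hence "p = 0" by simp
      thus ?thesis by (simp add: p_def g_def)
    qed
  qed
qed

lemma sa_bij:
  fixes C :: "'a::{real_inner,complete_space} \<Rightarrow> 'a"
  assumes sa: "self_adjoint DC C" and k: "0 < \<kappa>"
    and bnd: "\<forall>x\<in>DC. \<kappa> * norm x \<le> norm (C x - l *\<^sub>R x)"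
  shows "bij_betw (\<lambda>x. C x - l *\<^sub>R x) DC UNIV"
proof -
  have lo: "linear_operator DC C" and char: "\<And>y z. (\<forall>x\<in>DC. inner (C x) y = inner x z) \<longleftrightarrow> (y \<in> DC \<and> z = C y)"
    using sa unfolding self_adjoint_def by blast+
  have sub: "subspace DC" and addC: "\<And>x y. x \<in> DC \<Longrightarrow> y \<in> DC \<Longrightarrow> C (x + y) = C x + C y"
    and scC: "\<And>x r. x \<in> DC \<Longrightarrow> C (r *\<^sub>R x) = r *\<^sub>R C x"
    using lo unfolding linear_operator_def by blast+
  define T where "T = (\<lambda>x. C x - l *\<^sub>R x)"
  have Tadd: "T (x + y) = T x + T y" if "x \<in> DC" "y \<in> DC" for x y
    using addC[OF that] by (simp add: T_def algebra_simps)
  have Tsc: "T (r *\<^sub>R x) = r *\<^sub>R T x" if "x \<in> DC" for x r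
    using scC[OF that] by (simp add: T_def algebra_simps)
  have Tdiff: "T (x - y) = T x - T y" if "x \<in> DC" "y \<in> DC" for x y
  proof -
    have m: "(-1) *\<^sub>R y \<in> DC" using sub that by (intro subspace_scale) auto
    have "T (x + (-1) *\<^sub>R y) = T x + T ((-1) *\<^sub>R y)" by (rule Tadd[OF that(1) m])
    also have "T ((-1) *\<^sub>R y) = (-1) *\<^sub>R T y" by (rule Tsc[OF that(2)])
    finally show ?thesis by simp
  qed
  have symm: "inner (C v) y = inner v (C y)" if "v \<in> DC" "y \<in> DC" for v y
    using char[of y "C y"] that by blast
  have inj: "inj_on T DC"
  proof (rule inj_onI)
    fix x y assume xy: "x \<in> DC" "y \<in> DC" "T x = T y"
    have "x - y \<in> DC" using sub xy by (intro subspace_diff) auto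
    hence "\<kappa> * norm (x - y) \<le> norm (T (x - y))" using bnd by (simp add: T_def)
    also have "T (x - y) = 0" using Tdiff xy by simp
    finally have "\<kappa> * norm (x - y) \<le> 0" by simp
    hence "norm (x - y) \<le> 0" using k by (simp add: mult_le_0_iff)
    thus "x = y" by simp
  qed
  define R where "R = T ` DC"
  have subR: "subspace R" unfolding R_def subspace_def
  proof (intro conjI ballI allI)
    have "0 \<in> DC" using sub by (rule subspace_0)
    moreover have "T 0 = 0" using Tsc[OF \<open>0 \<in> DC\<close>, of 0] by simp
    ultimately show "0 \<in> T ` DC" by force
  next
    fix a b assume "a \<in> T ` DC" "b \<in> T ` DC"
    then obtain x y where "x \<in> DC" "y \<in> DC" "a = T x" "b = T y" by blast
    moreover have "x + y \<in> DC" using sub calculation by (intro subspace_add) auto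
    moreover have "a + b = T (x + y)" using Tadd calculation by simp
    ultimately show "a + b \<in> T ` DC" by blast
  next
    fix r a assume "a \<in> T ` DC"
    then obtain x where "x \<in> DC" "a = T x" by blast
    moreover have "r *\<^sub>R x \<in> DC" using sub calculation by (intro subspace_scale) auto
    moreover have "r *\<^sub>R a = T (r *\<^sub>R x)" using Tsc calculation by simp
    ultimately show "r *\<^sub>R a \<in> T ` DC" by blast
  qed
  have clR: "closed R" unfolding closed_sequential_limits
  proof (intro allI impI, elim conjE)
    fix fs f assume fR: "\<forall>n. fs n \<in> R" and lim: "fs \<longlonglongrightarrow> f"
    have "\<forall>n. \<exists>x. x \<in> DC \<and> fs n = T x" using fR unfolding R_def by blast
    from choice[OF this] obtain xs where "\<forall>n. xs n \<in> DC \<and> fs n = T (xs n)" by blast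
    hence xs: "\<And>n. xs n \<in> DC" "\<And>n. fs n = T (xs n)" by blast+
    have "Cauchy fs" using lim by (rule LIMSEQ_imp_Cauchy)
    have "Cauchy xs"
    proof (rule metric_CauchyI)
      fix e :: real assume e: "0 < e"
      obtain M where M: "\<forall>m\<ge>M. \<forall>n\<ge>M. dist (fs m) (fs n) < \<kappa> * e"
        using metric_CauchyD[OF \<open>Cauchy fs\<close>, of "\<kappa> * e"] k e by auto
      show "\<exists>M. \<forall>m\<ge>M. \<forall>n\<ge>M. dist (xs m) (xs n) < e"
      proof (intro exI allI impI)
        fix m n assume "M \<le> m" "M \<le> n"
        hence d: "norm (fs m - fs n) < \<kappa> * e" using M by (simp add: dist_norm)
        have "xs m - xs n \<in> DC" using sub xs by (intro subspace_diff) auto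
        hence "\<kappa> * norm (xs m - xs n) \<le> norm (T (xs m - xs n))" using bnd by (simp add: T_def)
        also have "T (xs m - xs n) = fs m - fs n" using Tdiff xs by simp
        finally have "\<kappa> * norm (xs m - xs n) < \<kappa> * e" using d by linarith
        hence "norm (xs m - xs n) < e" using k by simp
        thus "dist (xs m) (xs n) < e" by (simp add: dist_norm)
      qed
    qed
    then obtain x where xlim: "xs \<longlonglongrightarrow> x" using Cauchy_convergent_iff convergent_def by blast
    have "\<forall>v\<in>DC. inner (C v) x = inner v (f + l *\<^sub>R x)"
    proof
      fix v assume v: "v \<in> DC"
      have 1: "(\<lambda>n. inner (C v) (xs n)) \<longlonglongrightarrow> inner (C v) x" using xlim by (intro tendsto_intros)
      have 2: "(\<lambda>n. inner v (fs n + l *\<^sub>R xs n)) \<longlonglongrightarrow> inner v (f + l *\<^sub>R x)"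
        using xlim lim by (intro tendsto_intros)
      have "inner (C v) (xs n) = inner v (fs n + l *\<^sub>R xs n)" for n
        using symm[OF v xs(1)[of n]] xs(2)[of n] by (simp add: T_def)
      hence "(\<lambda>n. inner (C v) (xs n)) = (\<lambda>n. inner v (fs n + l *\<^sub>R xs n))" by (rule ext)
      with 1 2 show "inner (C v) x = inner v (f + l *\<^sub>R x)" using LIMSEQ_unique by metis
    qed
    hence "x \<in> DC \<and> f + l *\<^sub>R x = C x" using char by blast
    hence xD: "x \<in> DC" and e: "f + l *\<^sub>R x = C x" by blast+
    have "f = T x" unfolding T_def using e by (simp add: eq_diff_eq)
    note xD this
    thus "f \<in> R" unfolding R_def by blast
  qed
  have surj: "R = UNIV"
  proof (rule set_eqI, rule iffI)
    fix f :: 'a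
    obtain r where r: "r \<in> R" "\<forall>y\<in>R. inner (f - r) y = 0" using proj_exists[OF clR subR] by blast
    define g where "g = f - r"
    have "\<forall>v\<in>DC. inner (C v) g = inner v (l *\<^sub>R g)"
    proof
      fix v assume v: "v \<in> DC"
      have "inner (T v) g = 0" using r v unfolding g_def R_def by (simp add: inner_commute)
      thus "inner (C v) g = inner v (l *\<^sub>R g)" by (simp add: T_def inner_diff_left)
    qed
    hence gD: "g \<in> DC" and Cg: "l *\<^sub>R g = C g" using char by blast+
    have "\<kappa> * norm g \<le> norm (T g)" using bnd gD by (simp add: T_def)
    also have "T g = 0" using Cg by (simp add: T_def)
    finally have "norm g \<le> 0" using k by (simp add: mult_le_0_iff)
    hence "f = r" by (simp add: g_def)
    thus "f \<in> R" using r by simp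
  qed simp
  show ?thesis unfolding bij_betw_def using inj surj by (simp add: R_def T_def)
qed


lemma b_split:
  assumes nf: "nonneg_form Db b" and x1: "x1 \<in> Db" and x2: "x2 \<in> Db"
  shows "b (x1 + x2) (x2 - x1) = b x2 x2 - b x1 x1"
proof -
  have sub: "subspace Db"
    and add: "\<And>x y z. x \<in> Db \<Longrightarrow> y \<in> Db \<Longrightarrow> z \<in> Db \<Longrightarrow> b (x + y) z = b x z + b y z"
    and sc: "\<And>x y r. x \<in> Db \<Longrightarrow> y \<in> Db \<Longrightarrow> b (r *\<^sub>R x) y = r * b x y"
    and sy: "\<And>x y. x \<in> Db \<Longrightarrow> y \<in> Db \<Longrightarrow> b x y = b y x"
    using nf unfolding nonneg_form_def by blast+
  have m: "(-1) *\<^sub>R x1 \<in> Db" using sub x1 by (rule subspace_scale)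
  have w: "x2 - x1 \<in> Db" by (rule subspace_diff[OF sub x2 x1])
  have e: "x2 - x1 = x2 + (-1) *\<^sub>R x1" by simp
  have lin: "b (x2 - x1) z = b x2 z - b x1 z" if z: "z \<in> Db" for z
  proof -
    have "b (x2 - x1) z = b x2 z + b ((-1) *\<^sub>R x1) z" unfolding e by (rule add[OF x2 m z])
    also have "b ((-1) *\<^sub>R x1) z = - b x1 z" using sc[OF x1 z, of "-1"] by simp
    finally show ?thesis by simp
  qed
  have "b (x1 + x2) (x2 - x1) = b x1 (x2 - x1) + b x2 (x2 - x1)" by (rule add[OF x1 x2 w])
  also have "b x1 (x2 - x1) = b x2 x1 - b x1 x1" using sy[OF x1 w] lin[OF x1] by simp
  also have "b x2 (x2 - x1) = b x2 x2 - b x1 x2" using sy[OF x2 w] lin[OF x2] by simp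
  also have "b x2 x1 = b x1 x2" by (rule sy[OF x2 x1])
  finally show ?thesis by simp
qed

lemma C_bound:
  fixes E EC :: "real set \<Rightarrow> 'a::real_inner \<Rightarrow> 'a"
  assumes pE: "pvm E" and smC: "spectral_measure_of EC DC C"
    and nf: "nonneg_form Db b" and sub: "form_dom E \<subseteq> Db"
    and fdeq: "form_dom EC = form_dom E"
    and rel: "\<forall>x\<in>form_dom E. \<forall>y\<in>form_dom E. spec_form EC x y = spec_form E x y + b x y"
    and d0: "d \<ge> 0"
    and bb: "\<forall>x\<in>form_dom E. b x x \<le> c * (norm x)\<^sup>2 + d * spec_form E x x"
    and gap0: "\<And>v. E {\<alpha><..<\<beta>} v = 0"
    and k: "0 < \<kappa>" "\<kappa> \<le> \<beta> - l" "\<kappa> \<le> l - (\<alpha> + c + d * \<alpha>)"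
    and x: "x \<in> DC"
  shows "\<kappa> * norm x \<le> norm (C x - l *\<^sub>R x)"
proof -
  interpret e: pvm_l E by (rule pvm_l.intro[OF pE])
  have pEC: "pvm EC" using smC by (simp add: spectral_measure_of_def)
  interpret ec: pvm_l EC by (rule pvm_l.intro[OF pEC])
  have DCd: "DC = {x. integrable (spec_meas EC x) (\<lambda>\<mu>. \<mu>\<^sup>2)}"
    and Cf: "\<forall>x\<in>DC. \<forall>y\<in>form_dom EC. inner (C x) y = spec_form EC x y"
    using smC by (auto simp: spectral_measure_of_def)
  define S where "S = {..\<alpha>}"
  have Sb: "S \<in> sets borel" "-S \<in> sets borel" by (auto simp: S_def)
  have xf: "x \<in> form_dom E" using ec.fd_sq x DCd fdeq by blast
  define x1 where "x1 = E S x"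
  define x2 where "x2 = E (-S) x"
  have x1f: "x1 \<in> form_dom E" unfolding x1_def by (rule e.fd_restrict[OF xf Sb(1)])
  have x2f: "x2 \<in> form_dom E" unfolding x2_def by (rule e.fd_restrict[OF xf Sb(2)])
  have xs: "x = x1 + x2" unfolding x1_def x2_def using e.compl[OF Sb(1)] by simp
  define y where "y = x2 - x1"
  have yf: "y \<in> form_dom E" using xf unfolding y_def x1_def x2_def form_dom_def mem_Collect_eq
    by (simp add: e.M_orth_sum[OF Sb(1)])
  have o: "inner x1 x2 = 0" unfolding x1_def x2_def by (rule e.disj[OF Sb(1)])
  have o': "inner x2 x1 = 0" using o by (simp add: inner_commute)
  define a1 where "a1 = spec_form E x1 x1"
  define a2 where "a2 = spec_form E x2 x2"
  have hC: "inner (C x) y = a2 - a1 + (b x2 x2 - b x1 x1)"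
  proof -
    have "inner (C x) y = spec_form EC x y" using Cf x yf fdeq by blast
    also have "\<dots> = spec_form E x y + b x y" using rel xf yf by blast
    also have "spec_form E x y = a2 - a1" unfolding a1_def a2_def y_def x1_def x2_def
      by (rule e.form_split[OF Sb(1)])
    also have "b x y = b x2 x2 - b x1 x1" unfolding y_def xs
      using b_split[OF nf] x1f x2f sub by blast
    finally show ?thesis .
  qed
  define N1 where "N1 = (norm x1)\<^sup>2"
  define N2 where "N2 = (norm x2)\<^sup>2"
  have a1b: "a1 \<le> \<alpha> * N1"
  proof -
    have "integrable (spec_meas E x1) (\<lambda>\<mu>. \<mu>)"
      using x1f integrable_abs_iff[of "\<lambda>\<mu>. \<mu>" "spec_meas E x1"] unfolding form_dom_def by simp
    moreover have "AE \<mu> in spec_meas E x1. \<mu> \<le> \<alpha>"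
      unfolding x1_def by (rule eventually_mono[OF e.AE_support[OF Sb(1)]]) (simp add: S_def)
    ultimately show ?thesis unfolding a1_def N1_def e.form_self by (rule e.int_le)
  qed
  have a2b: "\<beta> * N2 \<le> a2"
  proof -
    have "integrable (spec_meas E x2) (\<lambda>\<mu>. \<mu>)"
      using x2f integrable_abs_iff[of "\<lambda>\<mu>. \<mu>" "spec_meas E x2"] unfolding form_dom_def by simp
    moreover have "AE \<mu> in spec_meas E x2. \<beta> \<le> \<mu>"
    proof -
      have ae1: "AE \<mu> in spec_meas E x2. \<mu> \<in> -S" unfolding x2_def by (rule e.AE_support[OF Sb(2)])
      have "emeasure (spec_meas E x2) {\<alpha><..<\<beta>} = 0" by (simp add: e.emeasure_M gap0)
      hence "{\<alpha><..<\<beta>} \<in> null_sets (spec_meas E x2)" by (simp add: null_sets_def e.sets_M)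
      hence ae2: "AE \<mu> in spec_meas E x2. \<mu> \<notin> {\<alpha><..<\<beta>}" by (rule AE_I') auto
      show ?thesis using ae1 ae2 by eventually_elim (auto simp: S_def)
    qed
    ultimately show ?thesis unfolding a2_def N2_def e.form_self by (rule e.int_ge)
  qed
  have b1: "b x1 x1 \<le> c * N1 + d * (\<alpha> * N1)"
  proof -
    have "b x1 x1 \<le> c * N1 + d * a1" using bb x1f by (simp add: N1_def a1_def)
    also have "d * a1 \<le> d * (\<alpha> * N1)" using a1b d0 by (rule mult_left_mono)
    finally show ?thesis by simp
  qed
  have b2: "0 \<le> b x2 x2" using nf x2f sub unfolding nonneg_form_def by blast
  have ixy: "inner x y = N2 - N1" unfolding xs y_def N1_def N2_def
    using o o' by (simp add: inner_add_left inner_diff_right power2_norm_eq_inner)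
  have nxy: "(norm y)\<^sup>2 = (norm x)\<^sup>2" unfolding xs y_def
    using o o' by (simp add: power2_norm_eq_inner inner_add_left inner_add_right inner_diff_left inner_diff_right)
  have nx: "(norm x)\<^sup>2 = N1 + N2" unfolding xs N1_def N2_def
    using o o' by (simp add: power2_norm_eq_inner inner_add_left inner_add_right)
  have ny: "norm y = norm x" using nxy by (simp add: power2_eq_iff_nonneg)
  define f where "f = C x - l *\<^sub>R x"
  have "inner f y = a2 - a1 + (b x2 x2 - b x1 x1) - l * (N2 - N1)"
    unfolding f_def using hC ixy by (simp add: inner_diff_left)
  moreover have "N1 \<ge> 0" "N2 \<ge> 0" by (simp_all add: N1_def N2_def)
  moreover have "\<kappa> * N2 \<le> (\<beta> - l) * N2" using k(2) \<open>N2 \<ge> 0\<close> by (rule mult_right_mono)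
  moreover have "\<kappa> * N1 \<le> (l - (\<alpha> + c + d * \<alpha>)) * N1" using k(3) \<open>N1 \<ge> 0\<close> by (rule mult_right_mono)
  ultimately have "\<kappa> * (N1 + N2) \<le> inner f y" using a1b a2b b1 b2
    by (simp add: algebra_simps)
  also have "\<dots> \<le> norm f * norm y" by (rule norm_cauchy_schwarz)
  finally have "\<kappa> * (norm x * norm x) \<le> norm f * norm x" using nx ny by (simp add: power2_eq_square)
  hence "(\<kappa> * norm x) * norm x \<le> norm f * norm x" by (simp add: mult.assoc)
  thus ?thesis
  proof (cases "x = 0")
    case True thus ?thesis by simp
  next
    case False thus ?thesis using \<open>(\<kappa> * norm x) * norm x \<le> norm f * norm x\<close>
      by (simp add: f_def mult_le_cancel_right)
  qed
qed

theorem theorem3p2: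
  fixes D DC :: "'a::{real_inner, complete_space} set"
    and A C :: "'a \<Rightarrow> 'a"
    and E EC :: "real set \<Rightarrow> 'a \<Rightarrow> 'a"
    and Db :: "'a set" and b :: "'a \<Rightarrow> 'a \<Rightarrow> real"
    and \<alpha> \<beta> c d :: real
  assumes "self_adjoint D A" and "spectral_measure_of E D A"
    and "{\<alpha><..<\<beta>} \<subseteq> real_resolvent_set D A"
    and "nonneg_form Db b" and "form_dom E \<subseteq> Db"
    and "self_adjoint DC C" and "spectral_measure_of EC DC C"
    and "form_dom EC = form_dom E"
    and "\<forall>x\<in>form_dom E. \<forall>y\<in>form_dom E. spec_form EC x y = spec_form E x y + b x y"
    and "c \<ge> 0" and "d \<ge> 0"
    and "\<forall>x\<in>form_dom E. b x x \<le> c * (norm x)\<^sup>2 + d * spec_form E x x"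
    and "\<alpha> + c + d * \<alpha> < \<beta>"
  shows "{\<alpha> + c + d * \<alpha><..<\<beta>} \<subseteq> real_resolvent_set DC C"
proof -
  have pE: "pvm E" using assms(2) by (simp add: spectral_measure_of_def)
  interpret e: pvm_l E by (rule pvm_l.intro[OF pE])
  have dense: "closure D = UNIV" using assms(1) by (simp add: self_adjoint_def)
  have gap0: "\<And>v. E {\<alpha><..<\<beta>} v = 0" by (rule e.gap_zero[OF assms(2) dense assms(3)])
  show ?thesis
  proof
    fix l assume l: "l \<in> {\<alpha> + c + d * \<alpha><..<\<beta>}"
    define \<kappa> where "\<kappa> = min (\<beta> - l) (l - (\<alpha> + c + d * \<alpha>))"
    have k: "0 < \<kappa>" "\<kappa> \<le> \<beta> - l" "\<kappa> \<le> l - (\<alpha> + c + d * \<alpha>)" using l by (auto simp: \<kappa>_def)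
    have bnd: "\<forall>x\<in>DC. \<kappa> * norm x \<le> norm (C x - l *\<^sub>R x)"
      using C_bound[OF pE assms(7) assms(4) assms(5) assms(8) assms(9) assms(11) assms(12) gap0 k] by blast
    have "bij_betw (\<lambda>x. C x - l *\<^sub>R x) DC UNIV" by (rule sa_bij[OF assms(6) k(1) bnd])
    moreover have "\<forall>x\<in>DC. norm x \<le> (1 / \<kappa>) * norm (C x - l *\<^sub>R x)"
    proof
      fix x assume "x \<in> DC"
      hence "\<kappa> * norm x \<le> norm (C x - l *\<^sub>R x)" using bnd by blast
      thus "norm x \<le> (1 / \<kappa>) * norm (C x - l *\<^sub>R x)" using k(1) by (simp add: field_simps)
    qed
    ultimately show "l \<in> real_resolvent_set DC C" unfolding real_resolvent_set_def by blast
  qed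
qed

end
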